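(* If $S,T\in \mathcal{B}_{A}(\mathcal{H})$, then $$d\omega _{A_{0}}\left( \begin{bmatrix} S & T \\ T & S \end{bmatrix} \right) =d\omega _{A_{0}}\left( \begin{bmatrix} S-T & 0 \\ 0 & S+T \end{bmatrix} \right).$$ In particular, $$d\omega _{A_{0}}\left( \begin{bmatrix} 0 & S \\ S & 0 \end{bmatrix} \right) =d\omega _{A}\left( S\right).$$
   Context: $\mathcal{H}$ is a complex Hilbert space and $A\in\mathcal{B}(\mathcal{H})$ is a positive operator; $\langle x,z\rangle_A=\langle Ax,z\rangle$ and $\|z\|_A=\|A^{1/2}z\|$. $\mathcal{B}_A(\mathcal{H})$ denotes the set of bounded operators $S$ on $\mathcal{H}$ admitting an $A$-adjoint, i.e. with $\mathcal{R}(S^*A)\subseteq\mathcal{R}(A)$. The $A$-Davis-Wielandt radius is $d\omega_A(S)=\sup\{(|\langle Sz,z\rangle_A|^2+\|Sz\|_A^4)^{1/2}: z\in\mathcal{H},\ \|z\|_A=1\}$. $A_0=\begin{bmatrix} A&0\\0&A\end{bmatrix}$ is the positive operator on $\mathcal{H}\oplus\mathcal{H}$, inducing $\langle x,z\rangle_{A_0}=\langle x_1,z_1\rangle_A+\langle x_2,z_2\rangle_A$ for $x=(x_1,x_2)$, $z=(z_1,z_2)$, and $d\omega_{A_0}$ is the corresponding $A_0$-Davis-Wielandt radius on $\mathcal{H}\oplus\mathcal{H}$. *)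

theory Defs
  imports "HOL-Analysis.Analysis"
begin

text \<open>Complex Hilbert spaces (not available in the distribution library):
  a real Banach space with a compatible complex scalar multiplication and a
  complex inner product (linear in the first argument) inducing the norm.\<close>

class chilbert_space = real_normed_vector + complete_space +
  fixes scaleC :: "complex \<Rightarrow> 'a \<Rightarrow> 'a" (infixr "*\<^sub>C" 75)
    and cinner :: "'a \<Rightarrow> 'a \<Rightarrow> complex"
  assumes scaleC_add_right: "c *\<^sub>C (x + y) = c *\<^sub>C x + c *\<^sub>C y"
    and scaleC_add_left: "(c + d) *\<^sub>C x = c *\<^sub>C x + d *\<^sub>C x"
    and scaleC_scaleC: "c *\<^sub>C (d *\<^sub>C x) = (c * d) *\<^sub>C x"
    and scaleC_one: "1 *\<^sub>C x = x"
    and scaleC_of_real: "complex_of_real r *\<^sub>C x = r *\<^sub>R x"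
    and cinner_add_left: "cinner (x + y) z = cinner x z + cinner y z"
    and cinner_scaleC_left: "cinner (c *\<^sub>C x) y = c * cinner x y"
    and cinner_commute: "cinner y x = cnj (cinner x y)"
    and cinner_self_norm: "cinner x x = complex_of_real ((norm x)\<^sup>2)"

definition bounded_clinear_op :: "('a::chilbert_space \<Rightarrow> 'a) \<Rightarrow> bool" where
  "bounded_clinear_op S \<longleftrightarrow> bounded_linear S \<and> (\<forall>c x. S (c *\<^sub>C x) = c *\<^sub>C S x)"

definition positive_op :: "('a::chilbert_space \<Rightarrow> 'a) \<Rightarrow> bool" where
  "positive_op A \<longleftrightarrow> bounded_clinear_op A \<and>
     (\<forall>x. Im (cinner (A x) x) = 0 \<and> 0 \<le> Re (cinner (A x) x))"

definition is_adjoint :: "('a::chilbert_space \<Rightarrow> 'a) \<Rightarrow> ('a \<Rightarrow> 'a) \<Rightarrow> bool" where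
  "is_adjoint S S' \<longleftrightarrow> (\<forall>x y. cinner (S x) y = cinner x (S' y))"

definition BA :: "('a::chilbert_space \<Rightarrow> 'a) \<Rightarrow> ('a \<Rightarrow> 'a) set" where
  "BA A = {S. bounded_clinear_op S \<and>
              (\<exists>S'. bounded_clinear_op S' \<and> is_adjoint S S' \<and> range (S' \<circ> A) \<subseteq> range A)}"

definition dw_radius :: "('b \<Rightarrow> 'b \<Rightarrow> complex) \<Rightarrow> ('b \<Rightarrow> 'b) \<Rightarrow> real" where
  "dw_radius ip S = Sup {sqrt ((cmod (ip (S z) z))\<^sup>2 + (sqrt (Re (ip (S z) (S z)))) ^ 4) | z.
                          sqrt (Re (ip z z)) = 1}"

definition cinnerA :: "('a::chilbert_space \<Rightarrow> 'a) \<Rightarrow> 'a \<Rightarrow> 'a \<Rightarrow> complex" where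
  "cinnerA A x z = cinner (A x) z"

definition dwA :: "('a::chilbert_space \<Rightarrow> 'a) \<Rightarrow> ('a \<Rightarrow> 'a) \<Rightarrow> real" where
  "dwA A S = dw_radius (cinnerA A) S"

text \<open>Operator matrices on H \<oplus> H (modelled as 'a \<times> 'a).\<close>
definition opmat :: "('a::chilbert_space \<Rightarrow> 'a) \<Rightarrow> ('a \<Rightarrow> 'a) \<Rightarrow> ('a \<Rightarrow> 'a) \<Rightarrow> ('a \<Rightarrow> 'a)
                     \<Rightarrow> 'a \<times> 'a \<Rightarrow> 'a \<times> 'a" where
  "opmat P Q R U = (\<lambda>(x1, x2). (P x1 + Q x2, R x1 + U x2))"

definition cinner_sum :: "'a::chilbert_space \<times> 'a \<Rightarrow> 'a \<times> 'a \<Rightarrow> complex" where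
  "cinner_sum x z = cinner (fst x) (fst z) + cinner (snd x) (snd z)"

definition A0 :: "('a::chilbert_space \<Rightarrow> 'a) \<Rightarrow> 'a \<times> 'a \<Rightarrow> 'a \<times> 'a" where
  "A0 A = opmat A (\<lambda>_. 0) (\<lambda>_. 0) A"

definition dwA0 :: "('a::chilbert_space \<Rightarrow> 'a) \<Rightarrow> ('a \<times> 'a \<Rightarrow> 'a \<times> 'a) \<Rightarrow> real" where
  "dwA0 A T = dw_radius (\<lambda>x z. cinner_sum (A0 A x) z) T"

end

theory Submission
  imports Defs
begin


lemma Sup_same_ub:
  fixes X Y :: "real set"
  assumes "\<And>z. (\<forall>x\<in>X. x \<le> z) \<longleftrightarrow> (\<forall>y\<in>Y. y \<le> z)"
  shows "Sup X = Sup Y"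
  unfolding Sup_real_def using assms by presburger

lemma cinner_add_right: "cinner (x::'a::chilbert_space) (y + z) = cinner x y + cinner x z"
  by (metis cinner_commute cinner_add_left complex_cnj_add)
lemma cinner_scaleC_right: "cinner (x::'a::chilbert_space) (c *\<^sub>C y) = cnj c * cinner x y"
  by (metis cinner_commute cinner_scaleC_left complex_cnj_mult)
lemma cinner_scaleR_left: "cinner (r *\<^sub>R (x::'a::chilbert_space)) y = complex_of_real r * cinner x y"
  by (metis scaleC_of_real cinner_scaleC_left)
lemma cinner_scaleR_right: "cinner (x::'a::chilbert_space) (r *\<^sub>R y) = complex_of_real r * cinner x y"
  by (metis scaleC_of_real cinner_scaleC_right complex_cnj_complex_of_real)
lemma cinner_minus_left: "cinner (- (x::'a::chilbert_space)) y = - cinner x y"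
  using cinner_scaleR_left[of "-1" x y] by simp
lemma cinner_minus_right: "cinner (x::'a::chilbert_space) (- y) = - cinner x y"
  using cinner_scaleR_right[of x "-1" y] by simp
lemma cinner_diff_left: "cinner ((x::'a::chilbert_space) - y) z = cinner x z - cinner y z"
  by (metis cinner_add_left cinner_minus_left diff_conv_add_uminus)
lemma cinner_diff_right: "cinner (x::'a::chilbert_space) (y - z) = cinner x y - cinner x z"
  by (metis cinner_add_right cinner_minus_right diff_conv_add_uminus)
lemma cinner_zero_left: "cinner 0 (y::'a::chilbert_space) = 0"
  using cinner_scaleR_left[of 0 y y] by simp
lemma cinner_zero_right: "cinner (x::'a::chilbert_space) 0 = 0"
  using cinner_scaleR_right[of x 0 x] by simp

lemmas cinner_simps = cinner_add_left cinner_add_right cinner_scaleR_left cinner_scaleR_right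
  cinner_minus_left cinner_minus_right cinner_diff_left cinner_diff_right cinner_zero_left cinner_zero_right

lemma bco_linear:
  assumes "bounded_clinear_op S"
  shows "S (x + y) = S x + S y" "S (r *\<^sub>R x) = r *\<^sub>R S x" "S (x - y) = S x - S y"
    "S (- x) = - S x" "S 0 = 0" "S (c *\<^sub>C x) = c *\<^sub>C S x"
  using assms unfolding bounded_clinear_op_def
  by (auto simp: linear_add linear_scale linear_diff linear_neg linear_0 bounded_linear.linear)


lemma dw_transfer:
  assumes "\<And>u v. ip (W u) (W v) = ip u v" "\<And>z. M (W z) = W (D z)" "\<And>y. W (Winv y) = y"
  shows "dw_radius ip M = dw_radius ip D"
proof -
  have "{sqrt ((cmod (ip (M z) z))\<^sup>2 + (sqrt (Re (ip (M z) (M z)))) ^ 4) | z. sqrt (Re (ip z z)) = 1}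
      = {sqrt ((cmod (ip (D z) z))\<^sup>2 + (sqrt (Re (ip (D z) (D z)))) ^ 4) | z. sqrt (Re (ip z z)) = 1}"
  proof (intro equalityI subsetI)
    fix a assume "a \<in> {sqrt ((cmod (ip (M z) z))\<^sup>2 + (sqrt (Re (ip (M z) (M z)))) ^ 4) | z. sqrt (Re (ip z z)) = 1}"
    then obtain z where z: "a = sqrt ((cmod (ip (M z) z))\<^sup>2 + (sqrt (Re (ip (M z) (M z)))) ^ 4)" "sqrt (Re (ip z z)) = 1" by blast
    have "z = W (Winv z)" using assms(3) by simp
    then show "a \<in> {sqrt ((cmod (ip (D z) z))\<^sup>2 + (sqrt (Re (ip (D z) (D z)))) ^ 4) | z. sqrt (Re (ip z z)) = 1}"
      using z assms(1,2) by (intro CollectI exI[of _ "Winv z"]) (metis (no_types, lifting))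
  next
    fix a assume "a \<in> {sqrt ((cmod (ip (D z) z))\<^sup>2 + (sqrt (Re (ip (D z) (D z)))) ^ 4) | z. sqrt (Re (ip z z)) = 1}"
    then obtain z where z: "a = sqrt ((cmod (ip (D z) z))\<^sup>2 + (sqrt (Re (ip (D z) (D z)))) ^ 4)" "sqrt (Re (ip z z)) = 1" by blast
    then show "a \<in> {sqrt ((cmod (ip (M z) z))\<^sup>2 + (sqrt (Re (ip (M z) (M z)))) ^ 4) | z. sqrt (Re (ip z z)) = 1}"
      using assms(1,2) by (intro CollectI exI[of _ "W z"]) simp
  qed
  then show ?thesis unfolding dw_radius_def by simp
qed

lemma ip_A0: "cinner_sum (A0 A x) z = cinner (A (fst x)) (fst z) + cinner (A (snd x)) (snd z)"
  by (cases x) (simp add: cinner_sum_def A0_def opmat_def)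

lemma part1:
  fixes A S T :: "'a::chilbert_space \<Rightarrow> 'a"
  assumes A: "bounded_clinear_op A" and S: "bounded_clinear_op S" and T: "bounded_clinear_op T"
  shows "dwA0 A (opmat S T T S) = dwA0 A (opmat (\<lambda>x. S x - T x) (\<lambda>_. 0) (\<lambda>_. 0) (\<lambda>x. S x + T x))"
proof -
  define c :: real where "c = 1 / sqrt 2"
  have cc: "complex_of_real c * complex_of_real c = 1/2"
    unfolding c_def by (simp flip: of_real_mult)
  have cc': "c * c = 1/2" unfolding c_def by simp
  define W where "W = (\<lambda>(x1::'a, x2::'a). (c *\<^sub>R (x1 + x2), c *\<^sub>R (x2 - x1)))"
  define Winv where "Winv = (\<lambda>(x1::'a, x2::'a). (c *\<^sub>R (x1 - x2), c *\<^sub>R (x1 + x2)))"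
  note lin = bco_linear[OF A] bco_linear[OF S] bco_linear[OF T]
  show ?thesis unfolding dwA0_def
  proof (rule dw_transfer[where W=W and Winv=Winv])
    fix u v :: "'a \<times> 'a"
    obtain u1 u2 v1 v2 where uv: "u = (u1,u2)" "v = (v1,v2)" by fastforce
    have "cinner_sum (A0 A (W u)) (W v) = complex_of_real c * complex_of_real c *
       (cinner (A u1 + A u2) (v1 + v2) + cinner (A u2 - A u1) (v2 - v1))"
      unfolding ip_A0 W_def uv by (simp add: lin(2) cinner_scaleR_left cinner_scaleR_right lin(1,3) mult_ac distrib_left)
    also have "\<dots> = cinner_sum (A0 A u) v"
      unfolding cc ip_A0 uv by (simp add: cinner_simps algebra_simps)
    finally show "cinner_sum (A0 A (W u)) (W v) = cinner_sum (A0 A u) v" .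
  next
    fix z :: "'a \<times> 'a"
    obtain z1 z2 where z: "z = (z1,z2)" by fastforce
    show "opmat S T T S (W z) = W (opmat (\<lambda>x. S x - T x) (\<lambda>_. 0) (\<lambda>_. 0) (\<lambda>x. S x + T x) z)"
      unfolding z W_def opmat_def by (simp add: lin algebra_simps)
  next
    fix y :: "'a \<times> 'a"
    obtain y1 y2 where y: "y = (y1,y2)" by fastforce
    have "W (Winv y) = ((c*c) *\<^sub>R (2 *\<^sub>R y1), (c*c) *\<^sub>R (2 *\<^sub>R y2))"
      unfolding y W_def Winv_def by (simp add: algebra_simps scaleR_2)
    then show "W (Winv y) = y" unfolding cc' y by simp
  qed
qed



lemma cinner_scaleC_right': "cinner (x::'a::chilbert_space) (c *\<^sub>C y) = cnj c * cinner x y"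
  by (rule cinner_scaleC_right)

lemma pos_sa:
  fixes A :: "'a::chilbert_space \<Rightarrow> 'a"
  assumes "positive_op A"
  shows "cinner (A y) x = cinner y (A x)"
proof -
  have A: "bounded_clinear_op A" and P: "\<And>w. Im (cinner (A w) w) = 0" using assms unfolding positive_op_def by auto
  note lin = bco_linear[OF A]
  define p where "p = cinner (A x) y"
  define r where "r = cinner (A y) x"
  have "cinner (A (x + y)) (x + y) = cinner (A x) x + cinner (A y) y + p + r"
    unfolding p_def r_def by (simp add: lin cinner_simps)
  then have i1: "Im p + Im r = 0" using P[of "x+y"] P[of x] P[of y] by simp
  have "cinner (A (x + \<i> *\<^sub>C y)) (x + \<i> *\<^sub>C y) = cinner (A x) x + cinner (A y) y - \<i> * p + \<i> * r"
    unfolding p_def r_def by (simp add: lin cinner_simps cinner_scaleC_left cinner_scaleC_right' algebra_simps)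
  then have i2: "Re r - Re p = 0" using P[of "x + \<i> *\<^sub>C y"] P[of x] P[of y] by simp
  have "r = cnj p" using i1 i2 by (simp add: complex_eq_iff)
  then show ?thesis unfolding r_def p_def by (metis cinner_commute)
qed

lemma aux_frac: "(d::real) \<noteq> 0 \<Longrightarrow> -2*(n/d)*n + (n/d)^2*(d-1) = n^2*(-(d-1)-2)/d^2"
  by (simp add: field_simps power2_eq_square)

lemma pos_zero:
  fixes A :: "'a::chilbert_space \<Rightarrow> 'a"
  assumes "positive_op A" and "Re (cinner (A x) x) = 0"
  shows "A x = 0"
proof -
  have A: "bounded_clinear_op A" and P: "\<And>w. Im (cinner (A w) w) = 0 \<and> 0 \<le> Re (cinner (A w) w)"
    using assms(1) unfolding positive_op_def by auto
  note lin = bco_linear[OF A]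
  define n where "n = (norm (A x))\<^sup>2"
  define m where "m = Re (cinner (A (A x)) (A x))"
  have m0: "m \<ge> 0" using P unfolding m_def by auto
  have n0: "n \<ge> 0" unfolding n_def by simp
  have Ax: "cinner (A x) (A x) = complex_of_real n" unfolding n_def by (rule cinner_self_norm)
  have AAx: "cinner (A (A x)) x = complex_of_real n" using pos_sa[OF assms(1), of "A x" x] Ax by simp
  have key: "0 \<le> - 2 * t * n + t^2 * m" for t :: real
  proof -
    have "cinner (A (x - t *\<^sub>R A x)) (x - t *\<^sub>R A x) =
      cinner (A x) x - complex_of_real t * cinner (A x) (A x) - complex_of_real t * cinner (A (A x)) x
      + complex_of_real t * complex_of_real t * cinner (A (A x)) (A x)"
      by (simp add: lin cinner_simps algebra_simps)
    then have "Re (cinner (A (x - t *\<^sub>R A x)) (x - t *\<^sub>R A x)) = - 2 * t * n + t^2 * m"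
      using assms(2) unfolding Ax AAx m_def by (simp add: power2_eq_square)
    then show ?thesis using P[of "x - t *\<^sub>R A x"] by linarith
  qed
  have "0 \<le> - 2 * (n/(m+1)) * n + (n/(m+1))^2 * m" by (rule key)
  also have "\<dots> = n^2 * (- m - 2) / (m+1)^2" using aux_frac[of "m+1" n] m0 by simp
  finally have "0 \<le> n^2 * (- m - 2)" using m0
    by (simp add: zero_le_divide_iff)
  then have "n^2 * (m + 2) \<le> 0" by (simp add: algebra_simps)
  then have "n^2 \<le> 0" using m0 by (simp add: mult_le_0_iff)
  then have "n = 0" by simp
  then show ?thesis unfolding n_def by simp
qed

lemma BA_zero:
  fixes A S :: "'a::chilbert_space \<Rightarrow> 'a"
  assumes "positive_op A" "S \<in> BA A" "Re (cinner (A x) x) = 0"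
  shows "cinner (A (S x)) (S x) = 0" "cinner (A (S x)) x = 0"
proof -
  obtain S' where S': "is_adjoint S S'" "range (S' \<circ> A) \<subseteq> range A" using assms(2) unfolding BA_def by auto
  have Ax: "A x = 0" by (rule pos_zero[OF assms(1,3)])
  have "S' (A (S x)) \<in> range A" using S'(2) by auto
  then obtain w where w: "S' (A (S x)) = A w" by auto
  have "cinner (A (S x)) (S x) = cnj (cinner (S x) (A (S x)))" by (metis cinner_commute)
  also have "\<dots> = cnj (cinner x (A w))" using S'(1) w unfolding is_adjoint_def by simp
  also have "\<dots> = cnj (cinner (A x) w)" using pos_sa[OF assms(1), of x w] by simp
  finally show "cinner (A (S x)) (S x) = 0" using Ax by (simp add: cinner_zero_left)
  show "cinner (A (S x)) x = 0" using pos_sa[OF assms(1)] Ax by (simp add: cinner_zero_right)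
qed


lemma part2:
  fixes A S :: "'a::chilbert_space \<Rightarrow> 'a"
  assumes pos: "positive_op A" and SB: "S \<in> BA A"
  shows "dwA0 A (opmat (\<lambda>x. 0 - S x) (\<lambda>_. 0) (\<lambda>_. 0) (\<lambda>x. 0 + S x)) = dwA A S"
proof -
  have A: "bounded_clinear_op A" and P: "\<And>w. Im (cinner (A w) w) = 0" "\<And>w. 0 \<le> Re (cinner (A w) w)"
    using pos unfolding positive_op_def by auto
  have S: "bounded_clinear_op S" using SB unfolding BA_def by auto
  note lin = bco_linear[OF A] bco_linear[OF S]
  define q where "q x = Re (cinner (A x) x)" for x
  define a where "a x = cinner (A (S x)) x" for x
  define b where "b x = Re (cinner (A (S x)) (S x))" for x
  define D where "D = opmat (\<lambda>x. 0 - S x) (\<lambda>_. 0) (\<lambda>_. 0) (\<lambda>x::'a. 0 + S x)"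
  define ip where "ip = (\<lambda>x z. cinner_sum (A0 A x) (z::'a\<times>'a))"
  define X where "X = {sqrt ((cmod (ip (D z) z))\<^sup>2 + (sqrt (Re (ip (D z) (D z)))) ^ 4) | z. sqrt (Re (ip z z)) = 1}"
  define Y where "Y = {sqrt ((cmod (cinnerA A (S z) z))\<^sup>2 + (sqrt (Re (cinnerA A (S z) (S z)))) ^ 4) | z.
                          sqrt (Re (cinnerA A z z)) = 1}"
  have q0: "q x \<ge> 0" for x unfolding q_def using P by auto
  have b0: "b x \<ge> 0" for x unfolding b_def using P by auto
  have sq4: "(sqrt r) ^ 4 = r^2" if "r \<ge> 0" for r :: real
    using that by (metis real_sqrt_pow2 power_mult numeral_Bit0 mult_2 power_even_eq) 
  have Yv: "sqrt ((cmod (a u))\<^sup>2 + (b u)^2) \<in> Y" if "q u = 1" for u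
    using that b0[of u] unfolding Y_def cinnerA_def q_def a_def b_def
    by (intro CollectI exI[of _ u]) (simp add: sq4)
  have ipD: "ip (D (x1,x2)) (x1,x2) = a x2 - a x1" for x1 x2
    unfolding ip_def D_def a_def ip_A0 opmat_def by (simp add: lin cinner_simps)
  have ipDD: "Re (ip (D (x1,x2)) (D (x1,x2))) = b x1 + b x2" for x1 x2
    unfolding ip_def D_def b_def ip_A0 opmat_def by (simp add: lin cinner_simps)
  have ipzz: "Re (ip (x1,x2) (x1,x2)) = q x1 + q x2" for x1 x2
    unfolding ip_def q_def ip_A0 by simp
  have a00: "a 0 = 0" "b 0 = 0" "q 0 = 0" unfolding a_def b_def q_def by (simp_all add: lin cinner_simps)
  have YX: "Y \<subseteq> X"
  proof
    fix y assume "y \<in> Y"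
    then obtain u where u: "y = sqrt ((cmod (a u))\<^sup>2 + (b u)^2)" "q u = 1"
      unfolding Y_def cinnerA_def a_def b_def q_def using b0 unfolding b_def by (auto simp: sq4)
    show "y \<in> X" unfolding X_def
      apply (intro CollectI exI[of _ "(0, u)"])
      using u a00 ipD[of 0 u] ipDD[of 0 u] ipzz[of 0 u] b0[of u] by (simp add: sq4)
  qed
  have rep: "\<exists>\<alpha> \<beta>. a x = complex_of_real (q x) * \<alpha> \<and> b x = q x * \<beta> \<and> \<beta> \<ge> 0 \<and>
       (q x > 0 \<longrightarrow> sqrt ((cmod \<alpha>)\<^sup>2 + \<beta>^2) \<in> Y)" for x
  proof (cases "q x > 0")
    case True
    define t where "t = sqrt (q x)"
    have t0: "t > 0" and tt: "t * t = q x" using True unfolding t_def by (auto simp: real_sqrt_mult_self)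
    define u where "u = (1/t) *\<^sub>R x"
    have xu: "x = t *\<^sub>R u" unfolding u_def using t0 by simp
    have "q x = t * t * q u" unfolding xu q_def by (simp add: lin cinner_simps)
    then have qu: "q u = 1" using tt t0 True by simp
    have "a x = complex_of_real (t * t) * a u" unfolding xu a_def by (simp add: lin cinner_simps)
    moreover have "b x = (t * t) * b u" unfolding xu b_def by (simp add: lin cinner_simps)
    ultimately have "a x = complex_of_real (q x) * a u" "b x = q x * b u" unfolding tt by auto
    then show ?thesis using Yv[OF qu] b0[of u] by blast
  next
    case False
    then have "q x = 0" using q0[of x] by simp
    then have "a x = 0" "b x = 0" using BA_zero[OF pos SB, of x] unfolding q_def a_def b_def by auto
    then show ?thesis using False \<open>q x = 0\<close> by auto
  qed
  have XY: "\<exists>y\<in>Y. v \<le> y" if "v \<in> X" for v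
  proof -
    obtain x1 x2 where v: "v = sqrt ((cmod (a x2 - a x1))\<^sup>2 + (b x1 + b x2)^2)" and qq: "q x1 + q x2 = 1"
      using \<open>v \<in> X\<close> b0 unfolding X_def by (auto simp: ipD ipDD ipzz sq4 add_nonneg_nonneg)
    obtain \<alpha>1 \<beta>1 where r1: "a x1 = complex_of_real (q x1) * \<alpha>1" "b x1 = q x1 * \<beta>1" "\<beta>1 \<ge> 0"
      "q x1 > 0 \<longrightarrow> sqrt ((cmod \<alpha>1)\<^sup>2 + \<beta>1^2) \<in> Y" using rep by blast
    obtain \<alpha>2 \<beta>2 where r2: "a x2 = complex_of_real (q x2) * \<alpha>2" "b x2 = q x2 * \<beta>2" "\<beta>2 \<ge> 0"
      "q x2 > 0 \<longrightarrow> sqrt ((cmod \<alpha>2)\<^sup>2 + \<beta>2^2) \<in> Y" using rep by blast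
    define n1 where "n1 = sqrt ((cmod \<alpha>1)\<^sup>2 + \<beta>1^2)"
    define n2 where "n2 = sqrt ((cmod \<alpha>2)\<^sup>2 + \<beta>2^2)"
    have "v = norm (q x1 *\<^sub>R (- \<alpha>1, \<beta>1) + q x2 *\<^sub>R (\<alpha>2, \<beta>2))"
      unfolding v r1 r2 by (simp add: norm_Pair scaleR_conv_of_real algebra_simps)
    also have "\<dots> \<le> norm (q x1 *\<^sub>R (- \<alpha>1, \<beta>1)) + norm (q x2 *\<^sub>R (\<alpha>2, \<beta>2))" by (rule norm_triangle_ineq)
    also have "\<dots> = q x1 * n1 + q x2 * n2"
      unfolding n1_def n2_def norm_scaleR using q0[of x1] q0[of x2] by (simp add: norm_Pair)
    finally have vle: "v \<le> q x1 * n1 + q x2 * n2" .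
    have n0: "n1 \<ge> 0" "n2 \<ge> 0" unfolding n1_def n2_def by auto
    show ?thesis
    proof (cases "q x1 > 0 \<and> (q x2 = 0 \<or> n2 \<le> n1)")
      case True
      have "q x1 * n1 + q x2 * n2 \<le> (q x1 + q x2) * n1"
        using True q0[of x2] by (auto simp: distrib_right intro: mult_left_mono)
      then have "v \<le> n1" using vle qq by simp
      then show ?thesis using True r1(4) unfolding n1_def by blast
    next
      case False
      then have q2: "q x2 > 0" using qq q0[of x1] q0[of x2] by auto
      have "q x1 * n1 + q x2 * n2 \<le> (q x1 + q x2) * n2"
        using False q0[of x1] q2 by (auto simp: distrib_right intro: mult_left_mono)
      then have "v \<le> n2" using vle qq by simp
      then show ?thesis using q2 r2(4) unfolding n2_def by blast
    qed
  qed
  have "Sup X = Sup Y"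
  proof (rule Sup_same_ub)
    fix z
    show "(\<forall>x\<in>X. x \<le> z) \<longleftrightarrow> (\<forall>y\<in>Y. y \<le> z)"
    proof
      assume "\<forall>x\<in>X. x \<le> z" then show "\<forall>y\<in>Y. y \<le> z" using YX by blast
    next
      assume h: "\<forall>y\<in>Y. y \<le> z"
      show "\<forall>x\<in>X. x \<le> z"
      proof
        fix x assume "x \<in> X"
        then obtain y where "y \<in> Y" "x \<le> y" using XY by blast
        then show "x \<le> z" using h by force
      qed
    qed
  qed
  then show ?thesis unfolding dwA0_def dwA_def dw_radius_def X_def Y_def D_def ip_def .
qed


lemma zero_bco: "bounded_clinear_op (\<lambda>_::'a::chilbert_space. 0::'a)"
  unfolding bounded_clinear_op_def
proof (intro conjI allI)
  show "bounded_linear (\<lambda>_::'a. 0::'a)" by (rule bounded_linear_zero)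
  fix c :: complex and x :: 'a
  have "c *\<^sub>C (0::'a) = c *\<^sub>C (0 + 0)" by simp
  also have "\<dots> = c *\<^sub>C 0 + c *\<^sub>C 0" by (rule scaleC_add_right)
  finally show "(0::'a) = c *\<^sub>C 0" by simp
qed

theorem lemma3p5:
  fixes A S T :: "'a::chilbert_space \<Rightarrow> 'a"
  assumes "positive_op A"
    and "S \<in> BA A" and "T \<in> BA A"
  shows "dwA0 A (opmat S T T S) = dwA0 A (opmat (\<lambda>x. S x - T x) (\<lambda>_. 0) (\<lambda>_. 0) (\<lambda>x. S x + T x))
         \<and> dwA0 A (opmat (\<lambda>_. 0) S S (\<lambda>_. 0)) = dwA A S"
proof
  have A: "bounded_clinear_op A" using assms(1) unfolding positive_op_def by auto
  have S: "bounded_clinear_op S" using assms(2) unfolding BA_def by auto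
  have T: "bounded_clinear_op T" using assms(3) unfolding BA_def by auto
  show "dwA0 A (opmat S T T S) = dwA0 A (opmat (\<lambda>x. S x - T x) (\<lambda>_. 0) (\<lambda>_. 0) (\<lambda>x. S x + T x))"
    by (rule part1[OF A S T])
  have "dwA0 A (opmat (\<lambda>_. 0) S S (\<lambda>_. 0)) = dwA0 A (opmat (\<lambda>x. 0 - S x) (\<lambda>_. 0) (\<lambda>_. 0) (\<lambda>x. 0 + S x))"
    using part1[OF A zero_bco S] by simp
  also have "\<dots> = dwA A S" by (rule part2[OF assms(1,2)])
  finally show "dwA0 A (opmat (\<lambda>_. 0) S S (\<lambda>_. 0)) = dwA A S" .
qed

end
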